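(* Let $A=[a_{ij}]_{i,j=1}^n\in\mathcal{M}_n(\mathbb{H})$ be an upper triangular nilpotent matrix whose associated graph $\mathcal{G}_A$ is a tree, and let $\beta=(\beta_1,\dots,\beta_n)\in\mathbb{S}^+_{\mathbb{R}^n}$. Then $$\bigcup_{z_1,\dots,z_n\in\mathbb{S}_{\mathbb{H}}}\Big\{\sum_{i,j=1}^n\beta_i\beta_j z_i^*a_{ij}z_j\Big\}=\sum_{i,j=1}^n\mathbb{S}_{\mathbb{H}}(0,\beta_i\beta_j|a_{ij}|),$$ where the right-hand side is a Minkowski (elementwise) sum of sets.
   Context: $\mathbb{H}$ denotes the real quaternions, $q^*$ the conjugate and $|q|^2=qq^*$. $\mathbb{S}_{\mathbb{H}}=\{z\in\mathbb{H}:|z|=1\}$; for $r\ge0$, $\mathbb{S}_{\mathbb{H}}(0,r)=\{q\in\mathbb{H}:|q|=r\}$ (so $\mathbb{S}_{\mathbb{H}}(0,0)=\{0\}$). $\mathbb{S}^+_{\mathbb{R}^n}=\{\beta\in\mathbb{R}^n:\|\beta\|=1,\ \beta_i\ge0\ \forall i\}$. For $A=[a_{ij}]\in\mathcal{M}_n(\mathbb{H})$, the graph $\mathcal{G}_A$ is the undirected graph on vertices $\{1,\dots,n\}$ with an edge between $i$ and $j$ (a loop if $i=j$) whenever $a_{ij}\neq0$ or $a_{ji}\neq0$. A cycle is a path from a vertex to itself (loops count as cycles); $A$ is cycle-free if $\mathcal{G}_A$ has no cycles, and $A$ is a tree (matrix) if $\mathcal{G}_A$ is connected and cycle-free. An upper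 triangular nilpotent quaternionic matrix has zero diagonal. *)

theory Defs
  imports Complex_Main
begin

datatype quat = Quat (qre: real) (qi: real) (qj: real) (qk: real)

lemma quat_eq_iff: "x = y \<longleftrightarrow> qre x = qre y \<and> qi x = qi y \<and> qj x = qj y \<and> qk x = qk y"
  by (cases x; cases y) auto

instantiation quat :: ring_1
begin
definition "0 = Quat 0 0 0 0"
definition "1 = Quat 1 0 0 0"
definition "x + y = Quat (qre x + qre y) (qi x + qi y) (qj x + qj y) (qk x + qk y)"
definition "x - y = Quat (qre x - qre y) (qi x - qi y) (qj x - qj y) (qk x - qk y)"
definition "- x = Quat (- qre x) (- qi x) (- qj x) (- qk x)"
definition "x * y = Quat
   (qre x * qre y - qi x * qi y - qj x * qj y - qk x * qk y)
   (qre x * qi y + qi x * qre y + qj x * qk y - qk x * qj y)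
   (qre x * qj y - qi x * qk y + qj x * qre y + qk x * qi y)
   (qre x * qk y + qi x * qj y - qj x * qi y + qk x * qre y)"
instance
  by standard (simp_all add: quat_eq_iff zero_quat_def one_quat_def plus_quat_def
      minus_quat_def uminus_quat_def times_quat_def algebra_simps)
end

definition qcnj :: "quat \<Rightarrow> quat" where
  "qcnj x = Quat (qre x) (- qi x) (- qj x) (- qk x)"

definition qnorm :: "quat \<Rightarrow> real" where
  "qnorm x = sqrt ((qre x)\<^sup>2 + (qi x)\<^sup>2 + (qj x)\<^sup>2 + (qk x)\<^sup>2)"

definition qreal :: "real \<Rightarrow> quat" where
  "qreal r = Quat r 0 0 0"

definition qsphere :: "real \<Rightarrow> quat set" where
  "qsphere r = {q. qnorm q = r}"

definition unit_quats :: "quat set" where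
  "unit_quats = qsphere 1"

section \<open>n x n quaternionic matrices, indices 0..<n\<close>

type_synonym qmat = "nat \<Rightarrow> nat \<Rightarrow> quat"

definition mmult :: "nat \<Rightarrow> qmat \<Rightarrow> qmat \<Rightarrow> qmat" where
  "mmult n A B = (\<lambda>i j. \<Sum>k<n. A i k * B k j)"

definition midentity :: qmat where
  "midentity = (\<lambda>i j. if i = j then 1 else 0)"

primrec mpow :: "nat \<Rightarrow> qmat \<Rightarrow> nat \<Rightarrow> qmat" where
  "mpow n A 0 = midentity"
| "mpow n A (Suc m) = mmult n (mpow n A m) A"

definition upper_triangular :: "nat \<Rightarrow> qmat \<Rightarrow> bool" where
  "upper_triangular n A \<longleftrightarrow> (\<forall>i<n. \<forall>j<n. j < i \<longrightarrow> A i j = 0)"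

definition nilpotent_mat :: "nat \<Rightarrow> qmat \<Rightarrow> bool" where
  "nilpotent_mat n A \<longleftrightarrow> (\<exists>m. \<forall>i<n. \<forall>j<n. mpow n A m i j = 0)"

definition gedge :: "qmat \<Rightarrow> nat \<Rightarrow> nat \<Rightarrow> bool" where
  "gedge A i j \<longleftrightarrow> A i j \<noteq> 0 \<or> A j i \<noteq> 0"

definition gwalk :: "nat \<Rightarrow> qmat \<Rightarrow> nat list \<Rightarrow> bool" where
  "gwalk n A p \<longleftrightarrow> p \<noteq> [] \<and> set p \<subseteq> {..<n} \<and>
     (\<forall>k. Suc k < length p \<longrightarrow> gedge A (p ! k) (p ! Suc k))"

definition graph_connected :: "nat \<Rightarrow> qmat \<Rightarrow> bool" where
  "graph_connected n A \<longleftrightarrow>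
     (\<forall>i<n. \<forall>j<n. \<exists>p. gwalk n A p \<and> hd p = i \<and> last p = j)"

definition has_cycle :: "nat \<Rightarrow> qmat \<Rightarrow> bool" where
  "has_cycle n A \<longleftrightarrow> (\<exists>i<n. gedge A i i) \<or>
     (\<exists>p. 3 \<le> length p \<and> distinct p \<and> gwalk n A p \<and> gedge A (last p) (hd p))"

definition cycle_free :: "nat \<Rightarrow> qmat \<Rightarrow> bool" where
  "cycle_free n A \<longleftrightarrow> \<not> has_cycle n A"

definition is_tree :: "nat \<Rightarrow> qmat \<Rightarrow> bool" where
  "is_tree n A \<longleftrightarrow> graph_connected n A \<and> cycle_free n A"

definition pos_unit_vec :: "nat \<Rightarrow> (nat \<Rightarrow> real) \<Rightarrow> bool" where
  "pos_unit_vec n \<beta> \<longleftrightarrow> sqrt (\<Sum>i<n. (\<beta> i)\<^sup>2) = 1 \<and> (\<forall>i<n. 0 \<le> \<beta> i)"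

end

theory Submission imports Defs begin

lemma qnorm_sq: "(qnorm x)^2 = (qre x)\<^sup>2 + (qi x)\<^sup>2 + (qj x)\<^sup>2 + (qk x)\<^sup>2"
  unfolding qnorm_def by (simp add: add_nonneg_nonneg)

lemma qnorm_nonneg: "qnorm x \<ge> 0" unfolding qnorm_def by simp

lemma four_sq: "(a*e - b*f - c*g - d*h)^2 + (a*f + b*e + c*h - d*g)^2 + (a*g - b*h + c*e + d*f)^2 + (a*h + b*g - c*f + d*e)^2
  = ((a::real)^2+b^2+c^2+d^2)*(e^2+f^2+g^2+h^2)"
  by algebra

lemma qnorm_mult: "qnorm (x * y) = qnorm x * qnorm y"
proof -
  have "(qnorm (x*y))^2 = ((qnorm x) * qnorm y)^2"
    unfolding power_mult_distrib qnorm_sq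
    by (simp add: times_quat_def four_sq)
  then show ?thesis using qnorm_nonneg
    by (metis mult_nonneg_nonneg power2_eq_imp_eq)
qed

lemma qreal_mult: "qreal a * qreal b = qreal (a*b)"
  by (simp add: qreal_def times_quat_def)
lemma qreal_one: "qreal 1 = 1" by (simp add: qreal_def one_quat_def)
lemma qreal_comm: "qreal r * x = x * qreal r"
  by (simp add: qreal_def times_quat_def quat_eq_iff)
lemma qnorm_qreal: "qnorm (qreal r) = \<bar>r\<bar>"
  by (simp add: qreal_def qnorm_def)
lemma qnorm_qcnj: "qnorm (qcnj x) = qnorm x"
  by (simp add: qcnj_def qnorm_def)
lemma qnorm_zero: "qnorm x = 0 \<longleftrightarrow> x = 0"
proof
  assume "qnorm x = 0"
  then have "(qre x)\<^sup>2 + (qi x)\<^sup>2 + (qj x)\<^sup>2 + (qk x)\<^sup>2 = 0"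
    using qnorm_sq[of x] by simp
  then have "qre x = 0 \<and> qi x = 0 \<and> qj x = 0 \<and> qk x = 0"
    by (simp add: add_nonneg_eq_0_iff)
  then show "x = 0" by (simp add: quat_eq_iff zero_quat_def)
qed (simp add: qnorm_def zero_quat_def)

lemma qcnj_mult_self: "qcnj x * x = qreal ((qnorm x)^2)"
  unfolding qnorm_sq by (simp add: qcnj_def times_quat_def qreal_def quat_eq_iff power2_eq_square algebra_simps)
lemma self_mult_qcnj: "x * qcnj x = qreal ((qnorm x)^2)"
  unfolding qnorm_sq by (simp add: qcnj_def times_quat_def qreal_def quat_eq_iff power2_eq_square algebra_simps)
lemma qcnj_mult: "qcnj (x*y) = qcnj y * qcnj x"
  by (simp add: qcnj_def times_quat_def quat_eq_iff algebra_simps)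
lemma qcnj_qcnj: "qcnj (qcnj x) = x"
  by (simp add: qcnj_def quat_eq_iff)

definition qinv :: "quat \<Rightarrow> quat" where "qinv x = qreal (1 / (qnorm x)^2) * qcnj x"

lemma qinv_right:
  assumes "x \<noteq> 0" shows "x * qinv x = 1"
proof -
  have n: "qnorm x \<noteq> 0" using assms qnorm_zero by simp
  have "x * qinv x = qreal (1 / (qnorm x)^2) * (x * qcnj x)"
    unfolding qinv_def by (metis mult.assoc qreal_comm)
  also have "\<dots> = qreal (1 / (qnorm x)^2 * (qnorm x)^2)" by (simp add: self_mult_qcnj qreal_mult)
  also have "\<dots> = 1" using n by (simp add: qreal_one)
  finally show ?thesis .
qed

lemma qnorm_qinv: "x \<noteq> 0 \<Longrightarrow> qnorm (qinv x) = 1 / qnorm x"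
  unfolding qinv_def qnorm_mult qnorm_qreal qnorm_qcnj using qnorm_zero[of x] qnorm_nonneg[of x]
  by (simp add: power2_eq_square)

lemma unit_left:
  assumes "qnorm p = 1" "qnorm w = qnorm X"
  shows "\<exists>q. qnorm q = 1 \<and> qcnj p * X * q = w"
proof (cases "X = 0")
  case True
  then have "qnorm w = 0" using assms(2) qnorm_zero[of X] by simp
  then have "w = 0" using qnorm_zero[of w] by blast
  then show ?thesis using True by (intro exI[of _ 1]) (simp add: qnorm_def one_quat_def)
next
  case False
  define q where "q = qinv X * p * w"
  have "qcnj p * X * q = qcnj p * (X * qinv X) * p * w" unfolding q_def by (simp only: mult.assoc)
  also have "\<dots> = qcnj p * p * w" by (simp only: qinv_right[OF False] mult_1_right)
  also have "\<dots> = w" using assms(1) by (simp only: qcnj_mult_self power_one qreal_one mult_1_left)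
  finally have 1: "qcnj p * X * q = w" .
  have "qnorm X \<noteq> 0" using False qnorm_zero by blast
  then have "qnorm q = 1" unfolding q_def qnorm_mult using assms qnorm_qinv[OF False] by simp
  then show ?thesis using 1 by blast
qed

lemma unit_right:
  assumes "qnorm p = 1" "qnorm w = qnorm X"
  shows "\<exists>q. qnorm q = 1 \<and> qcnj q * X * p = w"
proof -
  obtain q where q: "qnorm q = 1" "qcnj p * qcnj X * q = qcnj w"
    using unit_left[of p "qcnj w" "qcnj X"] assms by (auto simp: qnorm_qcnj)
  have "qcnj q * X * p = qcnj (qcnj p * qcnj X * q)"
    by (simp only: qcnj_mult qcnj_qcnj mult.assoc)
  also have "\<dots> = qcnj (qcnj w)" by (simp only: q(2))
  also have "\<dots> = w" by (rule qcnj_qcnj)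
  finally show ?thesis using q(1) by blast
qed

lemma qnorm_one: "qnorm 1 = 1" by (simp add: qnorm_def one_quat_def)

lemma gedge_sym: "gedge A i j = gedge A j i" unfolding gedge_def by blast

lemma gwalk_rev: assumes "gwalk n A p" shows "gwalk n A (rev p)"
  unfolding gwalk_def
proof (intro conjI allI impI)
  show "rev p \<noteq> []" "set (rev p) \<subseteq> {..<n}" using assms unfolding gwalk_def by auto
  fix k assume k: "Suc k < length (rev p)"
  define m where "m = length p - 2 - k"
  have m: "Suc m < length p" "rev p ! k = p ! Suc m" "rev p ! Suc k = p ! m"
    using k unfolding m_def by (auto simp: rev_nth Suc_diff_Suc numeral_2_eq_2)
  have "gedge A (p ! m) (p ! Suc m)" using assms m(1) unfolding gwalk_def by blast
  then show "gedge A (rev p ! k) (rev p ! Suc k)" using m gedge_sym by metis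
qed

lemma gwalk_snoc: assumes "gwalk n A p" "v < n" "gedge A (last p) v"
  shows "gwalk n A (p @ [v])"
  unfolding gwalk_def
proof (intro conjI allI impI)
  show "p @ [v] \<noteq> []" by simp
  show "set (p @ [v]) \<subseteq> {..<n}" using assms unfolding gwalk_def by auto
  fix k assume k: "Suc k < length (p @ [v])"
  show "gedge A ((p @ [v]) ! k) ((p @ [v]) ! Suc k)"
  proof (cases "Suc k < length p")
    case True
    then show ?thesis using assms(1) unfolding gwalk_def by (simp add: nth_append)
  next
    case False
    then have kk: "k = length p - 1" "p \<noteq> []" using k assms(1) unfolding gwalk_def by auto
    then have "(p @ [v]) ! k = last p" by (simp add: nth_append last_conv_nth)
    moreover have "(p @ [v]) ! Suc k = v" using kk by (simp add: nth_append)
    ultimately show ?thesis using assms(3) by simp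
  qed
qed

lemma crossing: "p \<noteq> [] \<Longrightarrow> hd p \<in> S \<Longrightarrow> last p \<notin> S \<Longrightarrow>
   \<exists>k. Suc k < length p \<and> p ! k \<in> S \<and> p ! Suc k \<notin> S"
proof (induction p)
  case Nil then show ?case by simp
next
  case (Cons a p)
  then have "p \<noteq> []" by auto
  show ?case
  proof (cases "hd p \<in> S")
    case True
    then obtain k where "Suc k < length p" "p ! k \<in> S" "p ! Suc k \<notin> S"
      using Cons \<open>p \<noteq> []\<close> by auto
    then show ?thesis by (intro exI[of _ "Suc k"]) auto
  next
    case False
    then show ?thesis using Cons \<open>p \<noteq> []\<close> by (intro exI[of _ 0]) (auto simp: hd_conv_nth)
  qed
qed

definition dwalk :: "nat \<Rightarrow> qmat \<Rightarrow> nat set \<Rightarrow> nat \<Rightarrow> nat \<Rightarrow> bool" where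
  "dwalk n A S x y \<longleftrightarrow> (\<exists>p. gwalk n A p \<and> distinct p \<and> set p \<subseteq> S \<and> hd p = x \<and> last p = y)"

lemma dwalk_refl: "x < n \<Longrightarrow> x \<in> S \<Longrightarrow> dwalk n A S x x"
  unfolding dwalk_def gwalk_def by (intro exI[of _ "[x]"]) auto

lemma dwalk_mono: "dwalk n A S x y \<Longrightarrow> S \<subseteq> S' \<Longrightarrow> dwalk n A S' x y"
  unfolding dwalk_def by blast

lemma dwalk_ext:
  assumes "dwalk n A S x u" "v \<notin> S" "v < n" "gedge A u v"
  shows "dwalk n A (insert v S) x v \<and> dwalk n A (insert v S) v x"
proof -
  obtain p where p: "gwalk n A p" "distinct p" "set p \<subseteq> S" "hd p = x" "last p = u"
    using assms(1) unfolding dwalk_def by blast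
  have ne: "p \<noteq> []" using p(1) unfolding gwalk_def by blast
  have w: "gwalk n A (p @ [v])" using gwalk_snoc[OF p(1) assms(3)] p(5) assms(4) by simp
  have d: "distinct (p @ [v])" using p(2,3) assms(2) by auto
  have s: "set (p @ [v]) \<subseteq> insert v S" using p(3) by auto
  have "dwalk n A (insert v S) x v"
    unfolding dwalk_def using w d s ne p(4) by (intro exI[of _ "p @ [v]"]) auto
  moreover have "dwalk n A (insert v S) v x"
    unfolding dwalk_def using gwalk_rev[OF w] d s ne p(4)
    by (intro exI[of _ "rev (p @ [v])"]) (auto simp: hd_rev last_rev)
  ultimately show ?thesis by blast
qed

lemma no_two_nbrs:
  assumes cf: "cycle_free n A" and du: "dwalk n A S u s" and us: "u \<noteq> s"
    and v: "v \<notin> S" "v < n" and e1: "gedge A u v" and e2: "gedge A s v"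
  shows False
proof -
  obtain p where p: "gwalk n A p" "distinct p" "set p \<subseteq> S" "hd p = u" "last p = s"
    using du unfolding dwalk_def by blast
  have ne: "p \<noteq> []" using p(1) unfolding gwalk_def by blast
  have l2: "2 \<le> length p"
  proof (rule ccontr)
    assume "\<not> 2 \<le> length p"
    then have "length p < 2" by simp
    then obtain a where "p = [a]" using ne by (cases p; cases "tl p") auto
    then show False using p us by simp
  qed
  have w: "gwalk n A (p @ [v])" using gwalk_snoc[OF p(1) v(2)] p(5) e2 by simp
  have d: "distinct (p @ [v])" using p(2,3) v(1) by auto
  have "gedge A (last (p @ [v])) (hd (p @ [v]))" using ne p(4) e1 gedge_sym by auto
  then have "has_cycle n A" unfolding has_cycle_def using w d l2
    by (intro disjI2 exI[of _ "p @ [v]"]) auto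
  then show False using cf unfolding cycle_free_def by blast
qed

lemma zero_case:
  assumes "X = 0" "w \<in> qsphere (c * qnorm X)"
  shows "qreal c' * x * X * y = w"
proof -
  have "qnorm w = 0" using assms unfolding qsphere_def by (simp add: qnorm_zero)
  then show ?thesis using assms(1) qnorm_zero by simp
qed

lemma T_rearr: "qreal c * qcnj a * X * b = qcnj a * (qreal c * X) * b"
  by (simp add: qreal_comm mult.assoc)


lemma key:
  fixes n :: nat and A :: qmat and \<beta> :: "nat \<Rightarrow> real" and w :: "nat \<Rightarrow> nat \<Rightarrow> quat"
  assumes ut: "upper_triangular n A" and tr: "is_tree n A"
    and bpos: "\<forall>i<n. 0 \<le> \<beta> i"
    and wq: "\<forall>i<n. \<forall>j<n. w i j \<in> qsphere (\<beta> i * \<beta> j * qnorm (A i j))"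
  shows "\<exists>z. (\<forall>i<n. z i \<in> unit_quats) \<and>
     (\<forall>i<n. \<forall>j<n. qreal (\<beta> i * \<beta> j) * qcnj (z i) * A i j * z j = w i j)"
proof (cases "n = 0")
  case True then show ?thesis by auto
next
  case False
  have conn: "graph_connected n A" and cf: "cycle_free n A" using tr unfolding is_tree_def by auto
  have diag: "A i i = 0" if "i < n" for i
    using cf that unfolding cycle_free_def has_cycle_def gedge_def by blast
  define Inv where "Inv S z \<longleftrightarrow> S \<subseteq> {..<n} \<and> (\<forall>x\<in>S. \<forall>y\<in>S. dwalk n A S x y) \<and>
      (\<forall>i\<in>S. qnorm (z i) = 1) \<and>
      (\<forall>i\<in>S. \<forall>j\<in>S. qreal (\<beta> i * \<beta> j) * qcnj (z i) * A i j * z j = w i j)" for S z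
  have grow: "\<exists>S z. Inv S z \<and> card S = k" if "1 \<le> k" "k \<le> n" for k
    using that
  proof (induction k)
    case 0 then show ?case by simp
  next
    case (Suc k)
    show ?case
    proof (cases "k = 0")
      case True
      have n0: "0 < n" using False by simp
      have "qreal (\<beta> 0 * \<beta> 0) * qcnj 1 * A 0 0 * 1 = w 0 0"
        using zero_case[OF diag[OF n0]] wq n0 by blast
      then have "Inv {0} (\<lambda>_. 1)" unfolding Inv_def using n0
        by (auto simp: qnorm_one dwalk_refl)
      then show ?thesis using True by (intro exI[of _ "{0}"]) auto
    next
      case k0: False
      then obtain S z where I: "Inv S z" and cS: "card S = k" using Suc by auto
      have Ssub: "S \<subseteq> {..<n}" using I unfolding Inv_def by blast
      have fin: "finite S" using Ssub finite_subset by blast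
      have "S \<noteq> {..<n}" using cS Suc.prems by auto
      then obtain t where t: "t < n" "t \<notin> S" using Ssub by auto
      obtain s0 where s0: "s0 \<in> S" using cS k0 by fastforce
      obtain p where p: "gwalk n A p" "hd p = s0" "last p = t"
        using conn s0 Ssub t unfolding graph_connected_def by blast
      have ne: "p \<noteq> []" using p(1) unfolding gwalk_def by blast
      obtain m where m: "Suc m < length p" "p ! m \<in> S" "p ! Suc m \<notin> S"
        using crossing[OF ne] p s0 t by auto
      define u where "u = p ! m"
      define v where "v = p ! Suc m"
      have uS: "u \<in> S" and vS: "v \<notin> S" using m u_def v_def by auto
      have vn: "v < n" using p(1) m(1) unfolding gwalk_def v_def using nth_mem by blast
      have un: "u < n" using uS Ssub by auto
      have euv: "gedge A u v" using p(1) m(1) unfolding gwalk_def u_def v_def by blast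
      have uniq: "\<not> gedge A s v" if "s \<in> S" "s \<noteq> u" for s
        using no_two_nbrs[OF cf _ _ vS vn euv] I uS that unfolding Inv_def by blast
      have uv: "u \<noteq> v" using uS vS by auto
      have zu: "qnorm (z u) = 1" using I uS unfolding Inv_def by blast
      obtain q where q: "qnorm q = 1"
        and quv: "A u v \<noteq> 0 \<Longrightarrow> qreal (\<beta> u * \<beta> v) * qcnj (z u) * A u v * q = w u v"
        and qvu: "A u v = 0 \<Longrightarrow> qreal (\<beta> v * \<beta> u) * qcnj q * A v u * z u = w v u"
      proof (cases "A u v = 0")
        case True
        have "qnorm (w v u) = qnorm (qreal (\<beta> v * \<beta> u) * A v u)"
          using wq un vn bpos unfolding qsphere_def by (auto simp: qnorm_mult qnorm_qreal)
        then obtain q where "qnorm q = 1" "qcnj q * (qreal (\<beta> v * \<beta> u) * A v u) * z u = w v u"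
          using unit_right[OF zu] by blast
        then show ?thesis using that True by (simp add: T_rearr)
      next
        case False
        have "qnorm (w u v) = qnorm (qreal (\<beta> u * \<beta> v) * A u v)"
          using wq un vn bpos unfolding qsphere_def by (auto simp: qnorm_mult qnorm_qreal)
        then obtain q where "qnorm q = 1" "qcnj (z u) * (qreal (\<beta> u * \<beta> v) * A u v) * q = w u v"
          using unit_left[OF zu] by blast
        then show ?thesis using that False by (simp add: T_rearr)
      qed
      define z' where "z' = z(v := q)"
      have T0: "qreal (\<beta> i * \<beta> j) * qcnj (z' i) * A i j * z' j = w i j"
        if "A i j = 0" "i < n" "j < n" for i j
        using zero_case[OF that(1)] wq that(2,3) by blast
      have Tall: "qreal (\<beta> i * \<beta> j) * qcnj (z' i) * A i j * z' j = w i j"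
        if ij: "i \<in> insert v S" "j \<in> insert v S" for i j
      proof -
        have in_: "i < n" "j < n" using ij Ssub vn by auto
        show ?thesis
        proof (cases "i = v \<or> j = v")
          case False
          then show ?thesis using ij I unfolding Inv_def z'_def by auto
        next
          case True
          note T = True
          show ?thesis
          proof (cases "i = u \<or> j = u")
            case False
            then have "A i j = 0"
            proof (cases "i = v")
              case True
              then show ?thesis
              proof (cases "j = v")
                case True then show ?thesis using \<open>i = v\<close> diag vn by simp
              next
                case False
                then have "j \<in> S" "j \<noteq> u" using ij \<open>\<not> (i = u \<or> j = u)\<close> by auto
                then show ?thesis using uniq \<open>i = v\<close> unfolding gedge_def by blast
              qed
            next
              case False
              then have "j = v" "i \<in> S" "i \<noteq> u" using T ij \<open>\<not> (i = u \<or> j = u)\<close> by auto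
              then show ?thesis using uniq unfolding gedge_def by blast
            qed
            then show ?thesis using T0 in_ by blast
          next
            case True
            then have cases: "(i = u \<and> j = v) \<or> (i = v \<and> j = u)" using T uv by auto
            show ?thesis
            proof (cases "A u v = 0")
              case True
              then show ?thesis using cases qvu T0 in_ uv unfolding z'_def by auto
            next
              case False
              then have "\<not> v < u" using ut un vn unfolding upper_triangular_def by blast
              then have "u < v" using uv by simp
              then have "A v u = 0" using ut un vn unfolding upper_triangular_def by blast
              then show ?thesis using cases quv False T0 in_ uv unfolding z'_def by auto
            qed
          qed
        qed
      qed
      have walks: "\<forall>x\<in>insert v S. \<forall>y\<in>insert v S. dwalk n A (insert v S) x y"
      proof (intro ballI)
        fix x y assume xy: "x \<in> insert v S" "y \<in> insert v S"
        have d1: "dwalk n A (insert v S) x v \<and> dwalk n A (insert v S) v x" if "x \<in> S" for x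
          using dwalk_ext[of n A S x u v] I that uS vS vn euv unfolding Inv_def by blast
        show "dwalk n A (insert v S) x y"
          using xy d1 dwalk_refl[OF vn, of "insert v S" A] dwalk_mono[of n A S x y "insert v S"] I
          unfolding Inv_def by auto
      qed
      have "Inv (insert v S) z'"
        unfolding Inv_def using Ssub vn walks Tall I q unfolding Inv_def z'_def by auto
      moreover have "card (insert v S) = Suc k" using fin vS cS by simp
      ultimately show ?thesis by blast
    qed
  qed
  obtain S z where I: "Inv S z" and cS: "card S = n" using grow[of n] False by auto
  have "S = {..<n}" using I cS unfolding Inv_def by (simp add: card_subset_eq)
  then show ?thesis using I unfolding Inv_def unit_quats_def qsphere_def by (intro exI[of _ z]) auto
qed


theorem lemma3p4:
  fixes n :: nat and A :: qmat and \<beta> :: "nat \<Rightarrow> real"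
  assumes "upper_triangular n A" and "nilpotent_mat n A"
    and "is_tree n A"
    and "pos_unit_vec n \<beta>"
  shows "{(\<Sum>i<n. \<Sum>j<n. qreal (\<beta> i * \<beta> j) * qcnj (z i) * A i j * z j) | z.
            \<forall>i<n. z i \<in> unit_quats}
       = {(\<Sum>i<n. \<Sum>j<n. w i j) | w.
            \<forall>i<n. \<forall>j<n. w i j \<in> qsphere (\<beta> i * \<beta> j * qnorm (A i j))}"
proof -
  have bpos: "\<forall>i<n. 0 \<le> \<beta> i" using assms(4) unfolding pos_unit_vec_def by blast
  show ?thesis
  proof (intro equalityI subsetI)
    fix x assume "x \<in> {(\<Sum>i<n. \<Sum>j<n. qreal (\<beta> i * \<beta> j) * qcnj (z i) * A i j * z j) | z.
            \<forall>i<n. z i \<in> unit_quats}"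
    then obtain z where x: "x = (\<Sum>i<n. \<Sum>j<n. qreal (\<beta> i * \<beta> j) * qcnj (z i) * A i j * z j)"
      and z: "\<forall>i<n. z i \<in> unit_quats" by blast
    have "\<forall>i<n. \<forall>j<n. qreal (\<beta> i * \<beta> j) * qcnj (z i) * A i j * z j
        \<in> qsphere (\<beta> i * \<beta> j * qnorm (A i j))"
      using z bpos unfolding unit_quats_def qsphere_def
      by (auto simp: qnorm_mult qnorm_qreal qnorm_qcnj)
    then show "x \<in> {(\<Sum>i<n. \<Sum>j<n. w i j) | w.
            \<forall>i<n. \<forall>j<n. w i j \<in> qsphere (\<beta> i * \<beta> j * qnorm (A i j))}"
      using x by (intro CollectI exI[of _ "\<lambda>i j. qreal (\<beta> i * \<beta> j) * qcnj (z i) * A i j * z j"]) auto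
  next
    fix x assume "x \<in> {(\<Sum>i<n. \<Sum>j<n. w i j) | w.
            \<forall>i<n. \<forall>j<n. w i j \<in> qsphere (\<beta> i * \<beta> j * qnorm (A i j))}"
    then obtain w where x: "x = (\<Sum>i<n. \<Sum>j<n. w i j)"
      and w: "\<forall>i<n. \<forall>j<n. w i j \<in> qsphere (\<beta> i * \<beta> j * qnorm (A i j))" by blast
    obtain z where z: "\<forall>i<n. z i \<in> unit_quats"
      and e: "\<forall>i<n. \<forall>j<n. qreal (\<beta> i * \<beta> j) * qcnj (z i) * A i j * z j = w i j"
      using key[OF assms(1,3) bpos w] by blast
    have "x = (\<Sum>i<n. \<Sum>j<n. qreal (\<beta> i * \<beta> j) * qcnj (z i) * A i j * z j)"
      unfolding x using e by (intro sum.cong refl) auto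
    then show "x \<in> {(\<Sum>i<n. \<Sum>j<n. qreal (\<beta> i * \<beta> j) * qcnj (z i) * A i j * z j) | z.
            \<forall>i<n. z i \<in> unit_quats}" using z by blast
  qed
qed

end
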